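(* Let $X=\frac12\mathbb{D}=\{z\in\mathbb{C}:|z|<1/2\}$ and let $s(z,w)=\frac{1}{1-z\bar w}$ on $X$. For every $n\ge2$ there exists a kernel $\ell$ on $X$ with $\ell/s$ positive semi-definite such that: (1) a sequence in $X$ is interpolating for $\mathrm{Mult}(\mathcal{H}_s,\mathcal{H}_\ell)$ if and only if it satisfies the Carleson measure condition for $\mathcal{H}_s$ and is weakly separated by $\ell$; but (2) $\ell$ does not have the automatic separation property; specifically there is a sequence in $X$ that is $n$-weakly separated by $\ell$ but not $(n+1)$-weakly separated by $\ell$.
   Context: A kernel on $X$ is a positive semi-definite function $k:X\times X\to\mathbb{C}$; $\mathcal{H}_k$ its reproducing kernel Hilbert space, $k_w=k(\cdot,w)$, $\hat k_w=k_w/\|k_w\|$. "$\ell/s$ positive semi-definite" means $\ell=sg$ with $g$ a positive semi-definite kernel. $d_k(z,w)=\sqrt{1-|\langle\hat k_z,\hat k_w\rangle|^2}$; $\{\lambda_i\}$ is weakly separated by $k$ if $d_k(\lambda_i,\lambda_j)\ge\epsilon>0$ for $i\ne j$. For $n\ge2$, $\{\lambda_i\}$ is $n$-weakly separated by $k$ if there is $\epsilon>0$ such that for every $n$-point subset $\{\mu_1,\dots,\mu_n\}$ of $\{\lambda_i\}$, $\mathrm{dist}(\hat k_{\mu_1},\mathrm{span}\{\hat k_{\mu_2},\dots,\hat k_{\mu_n}\})\ge\epsilon$. $k$ has the automatic separation property if every sequence weakly separated by $k$ is $n$-weakly separated by $k$ for all $n\ge3$. Interpolating for $\mathrm{Mult}(\mathcal{H}_s,\mathcal{H}_\ell)$: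 for every bounded $\{w_i\}$ there is $\phi$ with $f\mapsto\phi f$ bounded $\mathcal{H}_s\to\mathcal{H}_\ell$ and $\phi(\lambda_i)=w_i\|\ell_{\lambda_i}\|/\|s_{\lambda_i}\|$. Carleson measure condition for $\mathcal{H}_s$: $\sum_i|f(\lambda_i)|^2/\|s_{\lambda_i}\|^2\le C\|f\|^2$ for all $f\in\mathcal{H}_s$, some $C>0$. *)

theory Defs
  imports "HOL-Analysis.Analysis"
begin

definition psd_on :: "'a set \<Rightarrow> ('a \<Rightarrow> 'a \<Rightarrow> complex) \<Rightarrow> bool" where
  "psd_on X k \<longleftrightarrow> (\<forall>(m::nat) (x::nat \<Rightarrow> 'a) (c::nat \<Rightarrow> complex).
      (\<forall>i<m. x i \<in> X) \<longrightarrow>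
      (let q = (\<Sum>i<m. \<Sum>j<m. cnj (c i) * c j * k (x i) (x j)) in Im q = 0 \<and> 0 \<le> Re q))"

definition quot_psd_on :: "'a set \<Rightarrow> ('a \<Rightarrow> 'a \<Rightarrow> complex) \<Rightarrow> ('a \<Rightarrow> 'a \<Rightarrow> complex) \<Rightarrow> bool" where
  "quot_psd_on X l s \<longleftrightarrow> (\<exists>g. psd_on X g \<and> (\<forall>z\<in>X. \<forall>w\<in>X. l z w = s z w * g z w))"

text \<open>RKHS ball: f belongs to H_k with norm at most C (Aronszajn's characterization:
  C^2 k(z,w) - f(z) conj(f(w)) is psd).\<close>
definition rkhs_ball :: "'a set \<Rightarrow> ('a \<Rightarrow> 'a \<Rightarrow> complex) \<Rightarrow> ('a \<Rightarrow> complex) \<Rightarrow> real \<Rightarrow> bool" where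
  "rkhs_ball X k f C \<longleftrightarrow> psd_on X (\<lambda>z w. complex_of_real (C\<^sup>2) * k z w - f z * cnj (f w))"

definition knorm :: "('a \<Rightarrow> 'a \<Rightarrow> complex) \<Rightarrow> 'a \<Rightarrow> real" where
  "knorm k w = sqrt (Re (k w w))"

text \<open>d_k(z,w) = sqrt(1 - |<hat k_z, hat k_w>|^2), with <k_z,k_w> = k(w,z).\<close>
definition dk :: "('a \<Rightarrow> 'a \<Rightarrow> complex) \<Rightarrow> 'a \<Rightarrow> 'a \<Rightarrow> real" where
  "dk k z w = sqrt (1 - (cmod (k w z / complex_of_real (knorm k z * knorm k w)))\<^sup>2)"

text \<open>Norm of the finite combination sum_{i<m} a_i k_{x_i} in H_k:
  ||sum a_i k_{x_i}||^2 = sum_{i,j} a_i conj(a_j) <k_{x_i},k_{x_j}> = sum a_i conj(a_j) k(x_j,x_i).\<close>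
definition comb_norm :: "('a \<Rightarrow> 'a \<Rightarrow> complex) \<Rightarrow> nat \<Rightarrow> (nat \<Rightarrow> complex) \<Rightarrow> (nat \<Rightarrow> 'a) \<Rightarrow> real" where
  "comb_norm k m a x = sqrt (Re (\<Sum>i<m. \<Sum>j<m. a i * cnj (a j) * k (x j) (x i)))"

text \<open>dist(hat k_{mu_0}, span{hat k_{mu_1},...,hat k_{mu_{n-1}}}) (points mu_0..mu_{n-1}).\<close>
definition span_dist :: "('a \<Rightarrow> 'a \<Rightarrow> complex) \<Rightarrow> nat \<Rightarrow> (nat \<Rightarrow> 'a) \<Rightarrow> real" where
  "span_dist k n \<mu> = (INF c::nat \<Rightarrow> complex.
      comb_norm k n (\<lambda>i. (if i = 0 then 1 else - c i) / complex_of_real (knorm k (\<mu> i))) \<mu>)"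

definition weakly_separated :: "('a \<Rightarrow> 'a \<Rightarrow> complex) \<Rightarrow> (nat \<Rightarrow> 'a) \<Rightarrow> bool" where
  "weakly_separated k lam \<longleftrightarrow> (\<exists>\<epsilon>>0. \<forall>i j. i \<noteq> j \<longrightarrow> dk k (lam i) (lam j) \<ge> \<epsilon>)"

text \<open>n-weakly separated: uniform lower bound over all n-point subsets {mu_0,...,mu_{n-1}}
  of the set {lam_i} (every choice of distinguished point mu_0).\<close>
definition n_weakly_separated :: "nat \<Rightarrow> ('a \<Rightarrow> 'a \<Rightarrow> complex) \<Rightarrow> (nat \<Rightarrow> 'a) \<Rightarrow> bool" where
  "n_weakly_separated n k lam \<longleftrightarrow> (\<exists>\<epsilon>>0. \<forall>\<mu>::nat \<Rightarrow> 'a.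
      inj_on \<mu> {..<n} \<and> \<mu> ` {..<n} \<subseteq> range lam \<longrightarrow> span_dist k n \<mu> \<ge> \<epsilon>)"

definition automatic_separation :: "'a set \<Rightarrow> ('a \<Rightarrow> 'a \<Rightarrow> complex) \<Rightarrow> bool" where
  "automatic_separation X k \<longleftrightarrow> (\<forall>lam::nat \<Rightarrow> 'a. range lam \<subseteq> X \<longrightarrow> weakly_separated k lam \<longrightarrow>
      (\<forall>n\<ge>3. n_weakly_separated n k lam))"

definition is_multiplier :: "'a set \<Rightarrow> ('a \<Rightarrow> 'a \<Rightarrow> complex) \<Rightarrow> ('a \<Rightarrow> 'a \<Rightarrow> complex) \<Rightarrow> ('a \<Rightarrow> complex) \<Rightarrow> bool" where
  "is_multiplier X s l \<phi> \<longleftrightarrow> (\<exists>M\<ge>0. \<forall>f C. C \<ge> 0 \<longrightarrow> rkhs_ball X s f C \<longrightarrow>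
      rkhs_ball X l (\<lambda>z. \<phi> z * f z) (M * C))"

definition interpolating :: "'a set \<Rightarrow> ('a \<Rightarrow> 'a \<Rightarrow> complex) \<Rightarrow> ('a \<Rightarrow> 'a \<Rightarrow> complex) \<Rightarrow> (nat \<Rightarrow> 'a) \<Rightarrow> bool" where
  "interpolating X s l lam \<longleftrightarrow> (\<forall>w::nat \<Rightarrow> complex. (\<exists>B. \<forall>i. cmod (w i) \<le> B) \<longrightarrow>
      (\<exists>\<phi>. is_multiplier X s l \<phi> \<and>
         (\<forall>i. \<phi> (lam i) = w i * complex_of_real (knorm l (lam i) / knorm s (lam i)))))"

definition carleson :: "'a set \<Rightarrow> ('a \<Rightarrow> 'a \<Rightarrow> complex) \<Rightarrow> (nat \<Rightarrow> 'a) \<Rightarrow> bool" where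
  "carleson X s lam \<longleftrightarrow> (\<exists>C>0. \<forall>f D. D \<ge> 0 \<longrightarrow> rkhs_ball X s f D \<longrightarrow>
      (\<forall>N. (\<Sum>i<N. (cmod (f (lam i)))\<^sup>2 / (knorm s (lam i))\<^sup>2) \<le> C * D\<^sup>2))"

definition half_disc :: "complex set" where
  "half_disc = ball 0 (1/2)"

definition szego :: "complex \<Rightarrow> complex \<Rightarrow> complex" where
  "szego z w = 1 / (1 - z * cnj w)"

end

theory Submission
  imports Defs
begin


definition Qf :: "('a \<Rightarrow> 'a \<Rightarrow> complex) \<Rightarrow> nat \<Rightarrow> (nat \<Rightarrow> 'a) \<Rightarrow> (nat \<Rightarrow> complex) \<Rightarrow> complex" where
  "Qf K m x c = (\<Sum>i<m. \<Sum>j<m. cnj (c i) * c j * K (x i) (x j))"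

lemma szego_sums:
  assumes "cmod z < 1" "cmod w < 1"
  shows "(\<lambda>p. (z * cnj w) ^ (p + d)) sums ((z * cnj w) ^ d * szego z w)"
proof -
  have "cmod (z * cnj w) < 1"
    using assms by (simp add: norm_mult) (metis mult_less_cancel_right1 less_trans mult_strict_mono' norm_ge_zero mult_1_right mult_le_one less_imp_le  )
  from sums_mult[OF geometric_sums[OF this], of "(z * cnj w) ^ d"]
  show ?thesis by (simp add: szego_def power_add mult_ac)
qed

lemma Qf_pow_szego:
  assumes "\<And>i. i < m \<Longrightarrow> cmod (x i) < 1"
  shows "Im (Qf (\<lambda>z w. (z * cnj w) ^ d * szego z w) m x c) = 0 \<and>
         Re (Qf (\<lambda>z w. (z * cnj w) ^ d * szego z w) m x c) \<ge> 0"
proof -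
  define B where "B q = (\<Sum>i<m. cnj (c i) * x i ^ (q + d))" for q
  have tm: "(\<Sum>i<m. \<Sum>j<m. cnj (c i) * c j * (x i * cnj (x j)) ^ (q + d))
      = complex_of_real ((cmod (B q))\<^sup>2)" for q
  proof -
    have "(\<Sum>i<m. \<Sum>j<m. cnj (c i) * c j * (x i * cnj (x j)) ^ (q + d))
        = (\<Sum>i<m. cnj (c i) * x i ^ (q + d)) * (\<Sum>j<m. c j * cnj (x j) ^ (q + d))"
      by (simp add: sum_distrib_left sum_distrib_right power_mult_distrib mult_ac)
    also have "\<dots> = B q * cnj (B q)"
    proof -
      have cB: "cnj (B q) = (\<Sum>j<m. c j * cnj (x j) ^ (q + d))"
        unfolding B_def by (simp add: cnj_sum)
      show ?thesis by (subst cB) (simp only: B_def)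
    qed
    finally show ?thesis by (simp only: complex_norm_square)
  qed
  have "(\<lambda>q. \<Sum>i<m. \<Sum>j<m. cnj (c i) * c j * (x i * cnj (x j)) ^ (q + d))
      sums Qf (\<lambda>z w. (z * cnj w) ^ d * szego z w) m x c"
    unfolding Qf_def
    by (intro sums_sum sums_mult) (auto intro: szego_sums assms)
  hence S: "(\<lambda>q. complex_of_real ((cmod (B q))\<^sup>2)) sums Qf (\<lambda>z w. (z * cnj w) ^ d * szego z w) m x c"
    by (simp add: tm)
  from sums_Im[OF S] have "(\<lambda>q. 0) sums Im (Qf (\<lambda>z w. (z * cnj w) ^ d * szego z w) m x c)" by simp
  hence i: "Im (Qf (\<lambda>z w. (z * cnj w) ^ d * szego z w) m x c) = 0" by (rule sums_unique2[OF _ sums_zero])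
  from sums_Re[OF S] have R: "(\<lambda>q. (cmod (B q))\<^sup>2) sums Re (Qf (\<lambda>z w. (z * cnj w) ^ d * szego z w) m x c)" by simp
  have "Re (Qf (\<lambda>z w. (z * cnj w) ^ d * szego z w) m x c) \<ge> 0"
    using sums_le[OF _ sums_zero R] by simp
  with i show ?thesis by simp
qed


definition sq :: "nat \<Rightarrow> complex" where "sq N = complex_of_real (1 / (real N + 3))"

lemma inj_sq: "inj sq"
  unfolding inj_def sq_def by (auto simp: field_simps)

lemma sq_real: "sq N = complex_of_real (1 / (real N + 3))" by (simp add: sq_def)

lemma norm_sq_eq: "cmod (sq N) = 1 / (real N + 3)"
  unfolding sq_def norm_of_real by simp

lemma norm_sq: "cmod (sq N) \<le> 1/3"
  unfolding norm_sq_eq by (simp add: divide_simps)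

lemma sq_half: "sq N \<in> half_disc"
  using norm_sq[of N] by (simp add: half_disc_def)

definition Vs :: "nat \<Rightarrow> complex \<Rightarrow> (nat + complex) set" where
  "Vs n z = (if z \<in> range sq then (if inv sq z mod Suc n = n then Inl ` {inv sq z - n..<inv sq z}
     else {Inl (inv sq z)}) else {Inr z})"

lemma Vs_sq: "Vs n (sq N) = (if N mod Suc n = n then Inl ` {N - n..<N} else {Inl N})"
  using inv_f_f[OF inj_sq] by (simp add: Vs_def)

lemma Vs_out: "z \<notin> range sq \<Longrightarrow> Vs n z = {Inr z}"
  by (simp add: Vs_def)

lemma finite_Vs: "finite (Vs n z)" by (simp add: Vs_def)

definition gk :: "nat \<Rightarrow> complex \<Rightarrow> complex \<Rightarrow> complex" where
  "gk n z w = of_nat (card (Vs n z \<inter> Vs n w))"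

definition lk :: "nat \<Rightarrow> complex \<Rightarrow> complex \<Rightarrow> complex" where
  "lk n z w = szego z w * gk n z w"

definition Tc :: "nat \<Rightarrow> (nat \<Rightarrow> complex) \<Rightarrow> (nat \<Rightarrow> complex) \<Rightarrow> nat \<Rightarrow> nat + complex \<Rightarrow> complex" where
  "Tc n x c m r = (\<Sum>i<m. c i * (if r \<in> Vs n (x i) then 1 else 0))"

lemma Qf_add: "Qf (\<lambda>z w. K1 z w + K2 z w) m x c = Qf K1 m x c + Qf K2 m x c"
  by (simp add: Qf_def distrib_left sum.distrib)

lemma Qf_cong: "(\<And>i j. i < m \<Longrightarrow> j < m \<Longrightarrow> K1 (x i) (x j) = K2 (x i) (x j)) \<Longrightarrow> Qf K1 m x c = Qf K2 m x c"
  unfolding Qf_def by (intro sum.cong refl) auto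

lemma Qf_one: "Qf (\<lambda>z w. 1) m x c = complex_of_real ((cmod (\<Sum>i<m. c i))\<^sup>2)"
proof -
  have "Qf (\<lambda>z w. 1) m x c = (\<Sum>i<m. c i) * cnj (\<Sum>i<m. c i)"
    unfolding Qf_def cnj_sum by (simp add: sum_distrib_left sum_distrib_right mult_ac)
  thus ?thesis by (simp only: complex_norm_square)
qed

lemma card_inter_sum:
  assumes "finite U" "A \<subseteq> U" "B \<subseteq> U"
  shows "(of_nat (card (A \<inter> B)) :: complex) = (\<Sum>r\<in>U. (if r \<in> A then 1 else 0) * (if r \<in> B then 1 else 0))"
proof -
  have "(\<Sum>r\<in>U. (if r \<in> A then 1 else 0) * (if r \<in> B then 1 else 0)) = (\<Sum>r\<in>U. if r \<in> A \<inter> B then (1::complex) else 0)"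
    by (intro sum.cong) auto
  also have "\<dots> = sum (\<lambda>_. 1) {r\<in>U. r \<in> A \<inter> B}"
    by (rule sum.inter_filter[symmetric, OF assms(1)])
  also have "{r\<in>U. r \<in> A \<inter> B} = A \<inter> B" using assms by auto
  finally show ?thesis by simp
qed

lemma Qf_feat:
  assumes "finite U" "\<And>i. i < m \<Longrightarrow> Vs n (x i) \<subseteq> U"
  shows "Qf (\<lambda>z w. K z w * gk n z w) m x c =
    (\<Sum>r\<in>U. Qf K m x (\<lambda>i. c i * (if r \<in> Vs n (x i) then 1 else 0)))"
proof -
  define F where "F i j r = cnj (c i * (if r \<in> Vs n (x i) then 1 else 0)) *
      (c j * (if r \<in> Vs n (x j) then 1 else 0)) * K (x i) (x j)" for i j r
  have eq: "cnj (c i) * c j * (K (x i) (x j) * gk n (x i) (x j)) = (\<Sum>r\<in>U. F i j r)"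
    if "i < m" "j < m" for i j
  proof -
    have "gk n (x i) (x j) = (\<Sum>r\<in>U. (if r \<in> Vs n (x i) then 1 else 0) * (if r \<in> Vs n (x j) then 1 else 0))"
      unfolding gk_def using assms that by (intro card_inter_sum) auto
    moreover have "F i j r = cnj (c i) * c j * K (x i) (x j) *
        ((if r \<in> Vs n (x i) then 1 else 0) * (if r \<in> Vs n (x j) then 1 else 0))" for r
      unfolding F_def by auto
    ultimately show ?thesis by (simp add: sum_distrib_left mult_ac)
  qed
  have "Qf (\<lambda>z w. K z w * gk n z w) m x c = (\<Sum>i<m. \<Sum>j<m. \<Sum>r\<in>U. F i j r)"
    unfolding Qf_def by (intro sum.cong refl) (simp add: eq)
  also have "\<dots> = (\<Sum>i<m. \<Sum>r\<in>U. \<Sum>j<m. F i j r)"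
    by (rule sum.cong[OF refl], rule sum.swap)
  also have "\<dots> = (\<Sum>r\<in>U. \<Sum>i<m. \<Sum>j<m. F i j r)"
    by (rule sum.swap)
  finally show ?thesis unfolding Qf_def F_def by simp
qed

lemma szego_split:
  assumes "cmod z < 1" "cmod w < 1"
  shows "szego z w = 1 + (z * cnj w) ^ 1 * szego z w"
proof -
  have "cmod (z * cnj w) < 1"
    using assms by (simp add: norm_mult) (metis mult_strict_mono' norm_ge_zero mult_1_right)
  hence "1 - z * cnj w \<noteq> 0" by (metis eq_iff_diff_eq_0 norm_one less_irrefl)
  thus ?thesis by (simp add: szego_def field_simps)
qed

lemma Qf_lk_split:
  assumes "\<And>i. i < m \<Longrightarrow> cmod (x i) < 1"
  shows "Qf (lk n) m x c = Qf (\<lambda>z w. 1 * gk n z w) m x c +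
     Qf (\<lambda>z w. ((z * cnj w) ^ 1 * szego z w) * gk n z w) m x c"
proof -
  have "Qf (lk n) m x c = Qf (\<lambda>z w. 1 * gk n z w + ((z * cnj w) ^ 1 * szego z w) * gk n z w) m x c"
    by (rule Qf_cong) (simp add: lk_def, subst szego_split[OF assms assms], auto simp: algebra_simps)
  thus ?thesis by (simp only: Qf_add)
qed

lemma Qf_g:
  assumes "finite U" "\<And>i. i < m \<Longrightarrow> Vs n (x i) \<subseteq> U"
  shows "Qf (\<lambda>z w. 1 * gk n z w) m x c = complex_of_real (\<Sum>r\<in>U. (cmod (Tc n x c m r))\<^sup>2)"
proof -
  have "Qf (\<lambda>z w. 1 * gk n z w) m x c = (\<Sum>r\<in>U. Qf (\<lambda>z w. 1) m x (\<lambda>i. c i * (if r \<in> Vs n (x i) then 1 else 0)))"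
    by (rule Qf_feat[OF assms, where K="\<lambda>z w. 1"])
  also have "\<dots> = (\<Sum>r\<in>U. complex_of_real ((cmod (Tc n x c m r))\<^sup>2))"
    unfolding Qf_one Tc_def by (rule refl)
  also have "\<dots> = complex_of_real (\<Sum>r\<in>U. (cmod (Tc n x c m r))\<^sup>2)"
    by (rule of_real_sum[symmetric])
  finally show ?thesis .
qed

lemma Qf_rest:
  assumes "\<And>i. i < m \<Longrightarrow> cmod (x i) < 1" "finite U" "\<And>i. i < m \<Longrightarrow> Vs n (x i) \<subseteq> U"
  shows "Im (Qf (\<lambda>z w. ((z * cnj w) ^ d * szego z w) * gk n z w) m x c) = 0 \<and>
         Re (Qf (\<lambda>z w. ((z * cnj w) ^ d * szego z w) * gk n z w) m x c) \<ge> 0"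
proof -
  have e: "Qf (\<lambda>z w. ((z * cnj w) ^ d * szego z w) * gk n z w) m x c =
    (\<Sum>r\<in>U. Qf (\<lambda>z w. (z * cnj w) ^ d * szego z w) m x (\<lambda>i. c i * (if r \<in> Vs n (x i) then 1 else 0)))"
    by (rule Qf_feat[OF assms(2,3)])
  show ?thesis unfolding e Im_sum Re_sum
    using Qf_pow_szego[OF assms(1)] by (auto intro: sum_nonneg)
qed

lemma Vs_union:
  fixes m :: nat and x :: "nat \<Rightarrow> complex"
  assumes "finite R"
  shows "finite (R \<union> (\<Union>i<m. Vs n (x i)))" "\<And>i. i < m \<Longrightarrow> Vs n (x i) \<subseteq> R \<union> (\<Union>i<m. Vs n (x i))"
  using assms finite_Vs by auto

lemma Re_lk_ge:
  assumes "\<And>i. i < m \<Longrightarrow> cmod (x i) < 1" "finite R"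
  shows "Re (Qf (lk n) m x c) \<ge> (\<Sum>r\<in>R. (cmod (Tc n x c m r))\<^sup>2)"
proof -
  define U where "U = R \<union> (\<Union>i<m. Vs n (x i))"
  have U: "finite U" "\<And>i. i < m \<Longrightarrow> Vs n (x i) \<subseteq> U" unfolding U_def using Vs_union[OF assms(2)] by auto
  have "(\<Sum>r\<in>R. (cmod (Tc n x c m r))\<^sup>2) \<le> (\<Sum>r\<in>U. (cmod (Tc n x c m r))\<^sup>2)"
    by (rule sum_mono2[OF U(1)]) (auto simp: U_def)
  also have "\<dots> \<le> Re (Qf (lk n) m x c)"
  proof -
    have sp: "Qf (lk n) m x c = Qf (\<lambda>z w. 1 * gk n z w) m x c +
      Qf (\<lambda>z w. ((z * cnj w) ^ 1 * szego z w) * gk n z w) m x c"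
      using assms(1) by (rule Qf_lk_split)
    have R: "Im (Qf (\<lambda>z w. ((z * cnj w) ^ 1 * szego z w) * gk n z w) m x c) = 0 \<and>
         Re (Qf (\<lambda>z w. ((z * cnj w) ^ 1 * szego z w) * gk n z w) m x c) \<ge> 0"
      using assms(1) U by (rule Qf_rest)
    show ?thesis using sp R Qf_g[OF U, where c=c] by simp
  qed
  finally show ?thesis .
qed

lemma psd_lk: "psd_on half_disc (lk n)"
  unfolding psd_on_def Let_def
proof (intro allI impI)
  fix m :: nat and x c assume x: "\<forall>i<m. x i \<in> half_disc"
  have xs: "\<And>i. i < m \<Longrightarrow> cmod (x i) < 1" using x by (auto simp: half_disc_def)
  define U where "U = {} \<union> (\<Union>i<m. Vs n (x i))"
  have U: "finite U" "\<And>i. i < m \<Longrightarrow> Vs n (x i) \<subseteq> U" unfolding U_def using Vs_union[of "{}"] by auto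
  have "(\<Sum>i<m. \<Sum>j<m. cnj (c i) * c j * lk n (x i) (x j)) = Qf (lk n) m x c" by (simp add: Qf_def)
  moreover have "Im (Qf (lk n) m x c) = 0 \<and> 0 \<le> Re (Qf (lk n) m x c)"
  proof -
    have sp: "Qf (lk n) m x c = Qf (\<lambda>z w. 1 * gk n z w) m x c +
      Qf (\<lambda>z w. ((z * cnj w) ^ 1 * szego z w) * gk n z w) m x c"
      using xs by (rule Qf_lk_split)
    have R: "Im (Qf (\<lambda>z w. ((z * cnj w) ^ 1 * szego z w) * gk n z w) m x c) = 0 \<and>
         Re (Qf (\<lambda>z w. ((z * cnj w) ^ 1 * szego z w) * gk n z w) m x c) \<ge> 0"
      using xs U by (rule Qf_rest)
    show ?thesis using sp R Qf_g[OF U, where c=c] by (simp add: sum_nonneg)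
  qed
  ultimately show "Im (\<Sum>i<m. \<Sum>j<m. cnj (c i) * c j * lk n (x i) (x j)) = 0 \<and>
      0 \<le> Re (\<Sum>i<m. \<Sum>j<m. cnj (c i) * c j * lk n (x i) (x j))" by simp
qed

lemma psd_gk: "psd_on half_disc (gk n)"
  unfolding psd_on_def Let_def
proof (intro allI impI)
  fix m :: nat and x c assume x: "\<forall>i<m. x i \<in> half_disc"
  define U where "U = {} \<union> (\<Union>i<m. Vs n (x i))"
  have U: "finite U" "\<And>i. i < m \<Longrightarrow> Vs n (x i) \<subseteq> U" unfolding U_def using Vs_union[of "{}"] by auto
  have "(\<Sum>i<m. \<Sum>j<m. cnj (c i) * c j * gk n (x i) (x j)) = Qf (\<lambda>z w. 1 * gk n z w) m x c" by (simp add: Qf_def)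
  also have "\<dots> = complex_of_real (\<Sum>r\<in>U. (cmod (Tc n x c m r))\<^sup>2)" by (rule Qf_g[OF U])
  finally show "Im (\<Sum>i<m. \<Sum>j<m. cnj (c i) * c j * gk n (x i) (x j)) = 0 \<and>
      0 \<le> Re (\<Sum>i<m. \<Sum>j<m. cnj (c i) * c j * gk n (x i) (x j))" by (simp add: sum_nonneg)
qed


lemma in_base:
  fixes M q n :: nat
  shows "(M mod Suc n = n \<and> M - n \<le> q \<and> q < M) \<longleftrightarrow> (q mod Suc n \<noteq> n \<and> M = Suc n * (q div Suc n) + n)"
proof
  assume h: "M mod Suc n = n \<and> M - n \<le> q \<and> q < M"
  define A where "A = M div Suc n"
  have M: "M = Suc n * A + n" using h mult_div_mod_eq[of "Suc n" M] by (simp add: A_def)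
  have qd: "q div Suc n = A" using h M by (intro div_nat_eqI) auto
  have qm: "q mod Suc n = q - Suc n * A" using qd minus_mult_div_eq_mod[of q "Suc n"] by simp
  show "q mod Suc n \<noteq> n \<and> M = Suc n * (q div Suc n) + n" using h M qd qm by auto
next
  assume h: "q mod Suc n \<noteq> n \<and> M = Suc n * (q div Suc n) + n"
  have q: "q = Suc n * (q div Suc n) + q mod Suc n" using mult_div_mod_eq[of "Suc n" q] by linarith
  have lt: "q mod Suc n < n" using h mod_less_divisor[of "Suc n" q] by linarith
  have "(n + Suc n * (q div Suc n)) mod Suc n = n" by (subst mod_mult_self2) simp
  hence "M mod Suc n = n" using h by (simp only: add.commute)
  thus "M mod Suc n = n \<and> M - n \<le> q \<and> q < M" using h q lt by linarith
qed


definition lastof :: "nat \<Rightarrow> nat \<Rightarrow> nat" where "lastof n q = Suc n * (q div Suc n) + n"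

lemma lastof_last: "lastof n q mod Suc n = n"
proof -
  have "(n + Suc n * (q div Suc n)) mod Suc n = n" by (subst mod_mult_self2) simp
  thus ?thesis by (simp only: lastof_def add.commute)
qed

lemma Inl_in_Vs: "Inl q \<in> Vs n (sq M) \<longleftrightarrow> (M mod Suc n \<noteq> n \<and> M = q) \<or> (q mod Suc n \<noteq> n \<and> M = lastof n q)"
  using in_base[of M n q] by (auto simp: Vs_sq lastof_def)

lemma sum_supp: fixes m :: nat shows "S \<subseteq> {..<m} \<Longrightarrow> (\<And>i. i < m \<Longrightarrow> i \<notin> S \<Longrightarrow> f i = 0) \<Longrightarrow> (\<Sum>i<m. f i) = sum f S"
  by (rule sum.mono_neutral_right) auto

lemma sq_ineq: "(cmod u)\<^sup>2 \<le> 2 * ((cmod (u + v))\<^sup>2 + (cmod v)\<^sup>2)"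
proof -
  have t: "cmod u \<le> cmod (u + v) + cmod v" using norm_triangle_ineq4[of "u + v" v] by simp
  have "(cmod u)\<^sup>2 \<le> (cmod (u + v) + cmod v)\<^sup>2" by (rule power_mono[OF t]) simp
  moreover have "(cmod (u + v) + cmod v)\<^sup>2 + (cmod (u + v) - cmod v)\<^sup>2 = 2 * ((cmod (u + v))\<^sup>2 + (cmod v)\<^sup>2)"
    by (simp add: power2_eq_square algebra_simps)
  moreover have "0 \<le> (cmod (u + v) - cmod v)\<^sup>2" by simp
  ultimately show ?thesis by linarith
qed

lemma lower_bound:
  assumes mn: "m \<le> n" and m1: "1 \<le> m" and inj: "inj_on \<nu> {..<m}"
  shows "Re (Qf (lk n) m (\<lambda>i. sq (\<nu> i)) a) \<ge> (cmod (a 0))\<^sup>2 / 2"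
proof -
  define x where "x = (\<lambda>i. sq (\<nu> i))"
  have xs: "cmod (x i) < 1" for i unfolding x_def using norm_sq[of "\<nu> i"] by linarith
  have T: "Tc n x a m (Inl q) = (\<Sum>i<m. a i * (if (\<nu> i mod Suc n \<noteq> n \<and> \<nu> i = q) \<or> (q mod Suc n \<noteq> n \<and> \<nu> i = lastof n q) then 1 else 0))" for q
    unfolding Tc_def x_def Inl_in_Vs by (rule refl)
  have one: "Re (Qf (lk n) m x a) \<ge> (cmod (Tc n x a m r))\<^sup>2" for r
    using Re_lk_ge[where m=m and x=x and R="{r}" and n=n and c=a] xs by simp
  have two: "Re (Qf (lk n) m x a) \<ge> (cmod (Tc n x a m r1))\<^sup>2 + (cmod (Tc n x a m r2))\<^sup>2" if "r1 \<noteq> r2" for r1 r2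
    using Re_lk_ge[where m=m and x=x and R="{r1,r2}" and n=n and c=a] xs that by simp
  have injD: "i = j" if "i < m" "j < m" "\<nu> i = \<nu> j" for i j using inj that by (auto dest: inj_onD)
  have "Re (Qf (lk n) m x a) \<ge> (cmod (a 0))\<^sup>2 / 2"
  proof (cases "\<nu> 0 mod Suc n = n")
    case True
    define N0 where "N0 = \<nu> 0"
    have N0n: "n \<le> N0" using True mod_less_eq_dividend[of N0 "Suc n"] by (simp add: N0_def)
    have "\<not> {N0 - n..<N0} \<subseteq> \<nu> ` {1..<m}"
    proof
      assume "{N0 - n..<N0} \<subseteq> \<nu> ` {1..<m}"
      hence "card {N0 - n..<N0} \<le> card (\<nu> ` {1..<m})" by (rule card_mono[rotated]) simp
      also have "\<dots> \<le> card {1..<m}" by (rule card_image_le) simp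
      finally show False using mn m1 N0n by simp
    qed
    then obtain q where q: "q \<in> {N0-n..<N0}" "q \<notin> \<nu> ` {1..<m}" by blast
    have qb: "q mod Suc n \<noteq> n" "N0 = lastof n q"
      using in_base[of N0 n q] True q(1) by (auto simp: lastof_def N0_def)
    have "Tc n x a m (Inl q) = sum (\<lambda>i. a i * (if (\<nu> i mod Suc n \<noteq> n \<and> \<nu> i = q) \<or> (q mod Suc n \<noteq> n \<and> \<nu> i = lastof n q) then 1 else 0)) {0}"
      unfolding T
    proof (rule sum_supp)
      show "{0} \<subseteq> {..<m}" using m1 by auto
      fix i assume i: "i < m" "i \<notin> {0}"
      have "\<nu> i \<noteq> q" using q(2) i by auto
      moreover have "\<nu> i \<noteq> N0" using injD[of i 0] i m1 by (auto simp: N0_def)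
      ultimately show "a i * (if (\<nu> i mod Suc n \<noteq> n \<and> \<nu> i = q) \<or> (q mod Suc n \<noteq> n \<and> \<nu> i = lastof n q) then 1 else 0) = 0"
        using qb by auto
    qed
    also have "\<dots> = a 0" using qb by (simp add: N0_def)
    finally have e: "Tc n x a m (Inl q) = a 0" .
    have h: "(cmod (a 0))\<^sup>2 \<le> Re (Qf (lk n) m x a)" using one[of "Inl q"] e by simp
    show ?thesis using h zero_le_power2[of "cmod (a 0)"] by linarith
  next
    case False
    define L where "L = lastof n (\<nu> 0)"
    have Ll: "L mod Suc n = n" unfolding L_def by (rule lastof_last)
    have L0: "L \<noteq> \<nu> 0" using Ll False by auto
    show ?thesis
    proof (cases "L \<in> \<nu> ` {1..<m}")
      case False2: False
      have "Tc n x a m (Inl (\<nu> 0)) = sum (\<lambda>i. a i * (if (\<nu> i mod Suc n \<noteq> n \<and> \<nu> i = \<nu> 0) \<or> (\<nu> 0 mod Suc n \<noteq> n \<and> \<nu> i = lastof n (\<nu> 0)) then 1 else 0)) {0}"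
        unfolding T
      proof (rule sum_supp)
        show "{0} \<subseteq> {..<m}" using m1 by auto
        fix i assume i: "i < m" "i \<notin> {0}"
        have "\<nu> i \<noteq> L" using False2 i by auto
        moreover have "\<nu> i \<noteq> \<nu> 0" using injD[of i 0] i m1 by auto
        ultimately show "a i * (if (\<nu> i mod Suc n \<noteq> n \<and> \<nu> i = \<nu> 0) \<or> (\<nu> 0 mod Suc n \<noteq> n \<and> \<nu> i = lastof n (\<nu> 0)) then 1 else 0) = 0"
          by (auto simp: L_def)
      qed
      also have "\<dots> = a 0" using False by simp
      finally have e: "Tc n x a m (Inl (\<nu> 0)) = a 0" .
      have h: "(cmod (a 0))\<^sup>2 \<le> Re (Qf (lk n) m x a)" using one[of "Inl (\<nu> 0)"] e by simp
      show ?thesis using h zero_le_power2[of "cmod (a 0)"] by linarith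
    next
      case True
      then obtain p where p: "p \<in> {1..<m}" "\<nu> p = L" by auto
      have Ln: "n \<le> L" by (simp add: L_def lastof_def)
      have v0in: "\<nu> 0 \<in> {L - n..<L}" using in_base[of L n "\<nu> 0"] False by (simp add: L_def lastof_def)
      have "\<not> ({L - n..<L} - {\<nu> 0}) \<subseteq> \<nu> ` ({1..<m} - {p})"
      proof
        assume "({L - n..<L} - {\<nu> 0}) \<subseteq> \<nu> ` ({1..<m} - {p})"
        hence "card ({L - n..<L} - {\<nu> 0}) \<le> card (\<nu> ` ({1..<m} - {p}))" by (rule card_mono[rotated]) simp
        also have "\<dots> \<le> card ({1..<m} - {p})" by (rule card_image_le) simp
        finally show False using mn m1 Ln p(1) v0in by (simp, arith)
      qed
      then obtain q where q: "q \<in> {L-n..<L}" "q \<noteq> \<nu> 0" "q \<notin> \<nu> ` ({1..<m} - {p})" by blast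
      have qb: "q mod Suc n \<noteq> n" "L = lastof n q"
        using in_base[of L n q] Ll q(1) by (auto simp: lastof_def)
      have p0: "p \<noteq> 0" "p < m" using p by auto
      have t1: "Tc n x a m (Inl (\<nu> 0)) = sum (\<lambda>i. a i * (if (\<nu> i mod Suc n \<noteq> n \<and> \<nu> i = \<nu> 0) \<or> (\<nu> 0 mod Suc n \<noteq> n \<and> \<nu> i = lastof n (\<nu> 0)) then 1 else 0)) {0, p}"
        unfolding T
      proof (rule sum_supp)
        show "{0, p} \<subseteq> {..<m}" using m1 p0 by auto
        fix i assume i: "i < m" "i \<notin> {0, p}"
        have "\<nu> i \<noteq> L" using injD[of i p] i p0 p(2) by auto
        moreover have "\<nu> i \<noteq> \<nu> 0" using injD[of i 0] i m1 by auto
        ultimately show "a i * (if (\<nu> i mod Suc n \<noteq> n \<and> \<nu> i = \<nu> 0) \<or> (\<nu> 0 mod Suc n \<noteq> n \<and> \<nu> i = lastof n (\<nu> 0)) then 1 else 0) = 0"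
          by (auto simp: L_def)
      qed
      also have "\<dots> = a 0 + a p" using False p0 p(2) Ll by (simp add: L_def)
      finally have t1': "Tc n x a m (Inl (\<nu> 0)) = a 0 + a p" .
      have t2: "Tc n x a m (Inl q) = sum (\<lambda>i. a i * (if (\<nu> i mod Suc n \<noteq> n \<and> \<nu> i = q) \<or> (q mod Suc n \<noteq> n \<and> \<nu> i = lastof n q) then 1 else 0)) {p}"
        unfolding T
      proof (rule sum_supp)
        show "{p} \<subseteq> {..<m}" using p0 by auto
        fix i assume i: "i < m" "i \<notin> {p}"
        have "\<nu> i \<noteq> L" using injD[of i p] i p0 p(2) by auto
        moreover have "\<nu> i \<noteq> q" using q(2,3) i by (cases "i = 0") auto
        ultimately show "a i * (if (\<nu> i mod Suc n \<noteq> n \<and> \<nu> i = q) \<or> (q mod Suc n \<noteq> n \<and> \<nu> i = lastof n q) then 1 else 0) = 0"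
          using qb by auto
      qed
      also have "\<dots> = a p" using qb p(2) by simp
      finally have t2': "Tc n x a m (Inl q) = a p" .
      have "Re (Qf (lk n) m x a) \<ge> (cmod (a 0 + a p))\<^sup>2 + (cmod (a p))\<^sup>2"
        using two[of "Inl (\<nu> 0)" "Inl q"] q(2) t1' t2' by auto
      thus ?thesis using sq_ineq[of "a 0" "a p"] by (simp add: field_simps)
    qed
  qed
  thus ?thesis by (simp add: x_def)
qed


lemma szego_diag: "szego z z = complex_of_real (1 / (1 - (cmod z)\<^sup>2))"
proof -
  have "z * cnj z = complex_of_real ((cmod z)\<^sup>2)" by (rule complex_norm_square[symmetric])
  thus ?thesis unfolding szego_def by simp
qed

lemma card_Vs_ge: "1 \<le> n \<Longrightarrow> 1 \<le> card (Vs n z)"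
proof -
  assume n: "1 \<le> n"
  show ?thesis
  proof (cases "z \<in> range sq")
    case True
    then obtain N where z: "z = sq N" by auto
    show ?thesis
    proof (cases "N mod Suc n = n")
      case True
      have "n \<le> N" using True mod_less_eq_dividend[of N "Suc n"] by simp
      thus ?thesis using True n by (simp add: z Vs_sq card_image)
    qed (simp add: z Vs_sq)
  qed (simp add: Vs_out)
qed

lemma card_Vs_le: "1 \<le> n \<Longrightarrow> z \<in> range sq \<Longrightarrow> card (Vs n z) \<le> n"
proof -
  assume n: "1 \<le> n" and "z \<in> range sq"
  then obtain N where z: "z = sq N" by auto
  show ?thesis
  proof (cases "N mod Suc n = n")
    case True
    have "n \<le> N" using True mod_less_eq_dividend[of N "Suc n"] by simp
    thus ?thesis using True n by (simp add: z Vs_sq card_image)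
  qed (use n in \<open>simp add: z Vs_sq\<close>)
qed

lemma lk_diag: "lk n z z = complex_of_real (real (card (Vs n z)) / (1 - (cmod z)\<^sup>2))"
  unfolding lk_def gk_def szego_diag by simp

lemma one_minus_pos: "cmod z < 1 \<Longrightarrow> 0 < 1 - (cmod z)\<^sup>2"
proof -
  assume "cmod z < 1"
  hence "(cmod z)\<^sup>2 < 1" by (simp add: power_less_one_iff abs_less_iff)
  thus ?thesis by simp
qed

lemma knorm_lk: "cmod z < 1 \<Longrightarrow> (knorm (lk n) z)\<^sup>2 = real (card (Vs n z)) / (1 - (cmod z)\<^sup>2)"
  using one_minus_pos[of z] unfolding knorm_def lk_diag by simp

lemma knorm_szego: "cmod z < 1 \<Longrightarrow> (knorm szego z)\<^sup>2 = 1 / (1 - (cmod z)\<^sup>2)"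
  using one_minus_pos[of z] unfolding knorm_def szego_diag by simp

lemma knorm_lk_nonneg: "cmod z < 1 \<Longrightarrow> 0 \<le> knorm (lk n) z"
  using one_minus_pos[of z] unfolding knorm_def lk_diag by simp

lemma comb_norm_Qf: "comb_norm k m a x = sqrt (Re (Qf k m x a))"
proof -
  have "(\<Sum>i<m. \<Sum>j<m. a i * cnj (a j) * k (x j) (x i)) = Qf k m x a"
    unfolding Qf_def by (subst sum.swap) (simp add: mult_ac)
  thus ?thesis by (simp add: comb_norm_def)
qed

lemma Qf_pts: "(\<And>i. i < m \<Longrightarrow> x i = y i) \<Longrightarrow> Qf K m x c = Qf K m y c"
  by (simp add: Qf_def)

lemma sq_bound: "z \<in> range sq \<Longrightarrow> 8/9 \<le> 1 - (cmod z)\<^sup>2"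
proof -
  assume "z \<in> range sq"
  then obtain N where z: "z = sq N" by auto
  have "cmod z \<le> 1/3" using norm_sq z by simp
  hence "(cmod z)\<^sup>2 \<le> (1/3)\<^sup>2" by (intro power_mono) auto
  thus ?thesis by (simp add: power2_eq_square)
qed

lemma nweak:
  assumes n1: "1 \<le> n"
  shows "n_weakly_separated n (lk n) sq"
proof -
  have main: "span_dist (lk n) n \<mu> \<ge> sqrt (1 / (3 * n))"
    if \<mu>: "inj_on \<mu> {..<n}" "\<mu> ` {..<n} \<subseteq> range sq" for \<mu>
  proof -
    define \<nu> where "\<nu> i = inv sq (\<mu> i)" for i
    have \<mu>\<nu>: "\<mu> i = sq (\<nu> i)" if "i < n" for i
      using \<mu>(2) that unfolding \<nu>_def by (auto simp: f_inv_into_f)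
    have inj\<nu>: "inj_on \<nu> {..<n}"
      using \<mu>(1) by (auto simp: inj_on_def \<mu>\<nu>)
    define K0 where "K0 = knorm (lk n) (\<mu> 0)"
    have z0: "\<mu> 0 \<in> range sq" using \<mu>(2) n1 by auto
    have z01: "cmod (\<mu> 0) < 1"
    proof -
      obtain N where "\<mu> 0 = sq N" using z0 by auto
      thus ?thesis using norm_sq[of N] by simp
    qed
    have K0sq: "K0\<^sup>2 = real (card (Vs n (\<mu> 0))) / (1 - (cmod (\<mu> 0))\<^sup>2)"
      unfolding K0_def by (rule knorm_lk[OF z01])
    have cardp: "1 \<le> real (card (Vs n (\<mu> 0)))" "real (card (Vs n (\<mu> 0))) \<le> n"
      using card_Vs_ge[OF n1, of "\<mu> 0"] card_Vs_le[OF n1 z0] by auto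
    have sb: "8/9 \<le> 1 - (cmod (\<mu> 0))\<^sup>2" by (rule sq_bound[OF z0])
    have K0le: "K0\<^sup>2 \<le> 3/2 * n"
    proof -
      have "K0\<^sup>2 \<le> real n / (8/9)" unfolding K0sq
        using cardp sb by (intro frac_le) auto
      thus ?thesis by simp
    qed
    have K0pos: "0 < K0\<^sup>2" unfolding K0sq using cardp sb by simp
    show ?thesis unfolding span_dist_def
    proof (rule cINF_greatest)
      fix c :: "nat \<Rightarrow> complex"
      define a where "a = (\<lambda>i. (if i = 0 then 1 else - c i) / complex_of_real (knorm (lk n) (\<mu> i)))"
      have "Re (Qf (lk n) n \<mu> a) = Re (Qf (lk n) n (\<lambda>i. sq (\<nu> i)) a)"
        using \<mu>\<nu> by (simp cong: Qf_pts)
      also have "\<dots> \<ge> (cmod (a 0))\<^sup>2 / 2"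
        by (rule lower_bound[OF order_refl n1 inj\<nu>])
      finally have q: "Re (Qf (lk n) n \<mu> a) \<ge> (cmod (a 0))\<^sup>2 / 2" .
      have "(cmod (a 0))\<^sup>2 = 1 / K0\<^sup>2"
        unfolding a_def K0_def using knorm_lk_nonneg[OF z01, of n] by (simp add: norm_divide power_divide)
      also have "\<dots> \<ge> 1 / (3/2 * n)" using K0le K0pos n1 by (intro divide_left_mono) auto
      finally have "1 / (3 * n) \<le> Re (Qf (lk n) n \<mu> a)" using q by simp
      thus "sqrt (1 / (3 * n)) \<le> comb_norm (lk n) n (\<lambda>i. (if i = 0 then 1 else - c i) / complex_of_real (knorm (lk n) (\<mu> i))) \<mu>"
        unfolding comb_norm_Qf a_def[symmetric] by (rule real_sqrt_le_mono)
    qed simp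
  qed
  show ?thesis unfolding n_weakly_separated_def
    using n1 main by (intro exI[of _ "sqrt (1 / (3 * n))"]) auto
qed


definition rr :: "nat \<Rightarrow> real" where "rr N = 1 / (real N + 3)"
lemma sq_rr: "sq N = complex_of_real (rr N)" by (simp add: sq_def rr_def)
lemma rr_pos: "0 < rr N" by (simp add: rr_def)
lemma rr_le: "rr N \<le> 1/3" by (simp add: rr_def divide_simps)

lemma szego_real: "szego (complex_of_real u) (complex_of_real v) = complex_of_real (1 / (1 - u * v))"
  by (simp add: szego_def)

lemma frac_bound:
  fixes u t :: real
  assumes "0 \<le> u" "u \<le> t" "t \<le> 1/3"
  shows "1 / (1 - u\<^sup>2) \<le> 1 + 9/8 * t\<^sup>2"
proof -
  have uu: "u\<^sup>2 \<le> t\<^sup>2" using assms by (intro power_mono) auto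
  have t9: "t\<^sup>2 \<le> 1/9" using power_mono[OF assms(3), of 2] assms by (simp add: power2_eq_square)
  have d: "8/9 \<le> 1 - u\<^sup>2" using uu t9 by linarith
  have e: "1 / (1 - u\<^sup>2) = 1 + u\<^sup>2 / (1 - u\<^sup>2)" using d by (simp add: field_simps)
  have "u\<^sup>2 / (1 - u\<^sup>2) \<le> t\<^sup>2 / (8/9)" using d uu by (intro frac_le) auto
  thus ?thesis using e by simp
qed

lemma D_bound:
  fixes u v t :: real
  assumes "0 \<le> u" "u \<le> t" "0 \<le> v" "v \<le> t" "t \<le> 1/3"
  shows "1 / (1 - u\<^sup>2) - 2 / (1 - u * v) + 1 / (1 - v\<^sup>2) \<le> 3 * t\<^sup>2"
proof -
  have uv: "u * v \<le> 1/9" using mult_mono[of u "1/3" v "1/3"] assms by simp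
  have uv0: "0 \<le> u * v" using assms by simp
  have "1 \<le> 1 / (1 - u * v)" using uv uv0 by (simp add: divide_simps)
  moreover have "1 / (1 - u\<^sup>2) \<le> 1 + 9/8 * t\<^sup>2" by (rule frac_bound) (use assms in auto)
  moreover have "1 / (1 - v\<^sup>2) \<le> 1 + 9/8 * t\<^sup>2" by (rule frac_bound) (use assms in auto)
  moreover have "0 \<le> t\<^sup>2" by simp
  ultimately show ?thesis by linarith
qed

lemma Qf_two:
  fixes m p :: nat
  assumes "0 < p" "p < m" "\<And>i. i < m \<Longrightarrow> i \<noteq> 0 \<Longrightarrow> i \<noteq> p \<Longrightarrow> b i = 0"
  shows "Qf K m x b = cnj (b 0) * b 0 * K (x 0) (x 0) + cnj (b 0) * b p * K (x 0) (x p)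
     + cnj (b p) * b 0 * K (x p) (x 0) + cnj (b p) * b p * K (x p) (x p)"
proof -
  have inner: "(\<Sum>j<m. cnj (b i) * b j * K (x i) (x j)) = cnj (b i) * b 0 * K (x i) (x 0) + cnj (b i) * b p * K (x i) (x p)" for i
  proof -
    have "(\<Sum>j<m. cnj (b i) * b j * K (x i) (x j)) = sum (\<lambda>j. cnj (b i) * b j * K (x i) (x j)) {0, p}"
      by (rule sum_supp) (use assms in auto)
    thus ?thesis using assms by simp
  qed
  have "Qf K m x b = (\<Sum>i<m. cnj (b i) * b 0 * K (x i) (x 0) + cnj (b i) * b p * K (x i) (x p))"
    unfolding Qf_def inner ..
  also have "\<dots> = sum (\<lambda>i. cnj (b i) * b 0 * K (x i) (x 0) + cnj (b i) * b p * K (x i) (x p)) {0, p}"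
    by (rule sum_supp) (use assms in auto)
  also have "\<dots> = cnj (b 0) * b 0 * K (x 0) (x 0) + cnj (b 0) * b p * K (x 0) (x p)
     + cnj (b p) * b 0 * K (x p) (x 0) + cnj (b p) * b p * K (x p) (x p)"
    using assms by (simp add: algebra_simps)
  finally show ?thesis .
qed

lemma Re_Qf_nonneg:
  assumes "\<And>i. i < m \<Longrightarrow> x i \<in> half_disc"
  shows "0 \<le> Re (Qf (lk n) m x c)"
  using psd_lk[of n] assms unfolding psd_on_def Let_def Qf_def by blast

lemma knorm_sq_pos: "0 < knorm (lk n) (sq N)" "(knorm (lk n) (sq N))\<^sup>2 = real (card (Vs n (sq N))) / (1 - (rr N)\<^sup>2)"
  if "1 \<le> n"
proof -
  have c: "cmod (sq N) < 1" using norm_sq[of N] by simp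
  have e: "cmod (sq N) = rr N" by (simp add: norm_sq_eq rr_def)
  show "(knorm (lk n) (sq N))\<^sup>2 = real (card (Vs n (sq N))) / (1 - (rr N)\<^sup>2)"
    using knorm_lk[OF c, of n] e by simp
  have "0 < real (card (Vs n (sq N))) / (1 - (cmod (sq N))\<^sup>2)"
    using card_Vs_ge[OF that, of "sq N"] one_minus_pos[OF c] by simp
  hence "0 < (knorm (lk n) (sq N))\<^sup>2" using knorm_lk[OF c, of n] by simp
  moreover have "0 \<le> knorm (lk n) (sq N)" by (rule knorm_lk_nonneg[OF c])
  ultimately show "0 < knorm (lk n) (sq N)" by (simp add: less_le)
qed

lemma modiv: "j < Suc n \<Longrightarrow> (Suc n * k + j) mod Suc n = j \<and> (Suc n * k + j) div Suc n = k"
proof -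
  assume j: "j < Suc n"
  have "(j + Suc n * k) mod Suc n = j mod Suc n" by (rule mod_mult_self2)
  hence "(Suc n * k + j) mod Suc n = j" using j by (simp add: add.commute)
  moreover have "(Suc n * k + j) div Suc n = k" by (rule div_nat_eqI) (use j in auto)
  ultimately show ?thesis by simp
qed



lemma lk_fun: "lk n = (\<lambda>z w. szego z w * gk n z w)"
  by (intro ext) (simp add: lk_def)

lemma not_nweak:
  assumes n1: "1 \<le> n"
  shows "\<not> n_weakly_separated (Suc n) (lk n) sq"
proof
  assume "n_weakly_separated (Suc n) (lk n) sq"
  then obtain \<epsilon> where \<epsilon>: "\<epsilon> > 0" "\<And>\<mu>. inj_on \<mu> {..<Suc n} \<and> \<mu> ` {..<Suc n} \<subseteq> range sq \<Longrightarrow> span_dist (lk n) (Suc n) \<mu> \<ge> \<epsilon>"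
    unfolding n_weakly_separated_def by blast
  define k where "k = nat \<lceil>2 * n / \<epsilon>\<rceil>"
  define t where "t = 1 / (real k + 3)"
  define B where "B = Suc n * k"
  define \<nu> where "\<nu> i = (if i = 0 then B + n else B + (i - 1))" for i
  define \<mu> where "\<mu> i = sq (\<nu> i)" for i
  have inj\<nu>: "inj_on \<nu> {..<Suc n}"
    unfolding inj_on_def \<nu>_def by auto
  have inj\<mu>: "inj_on \<mu> {..<Suc n}"
    using inj\<nu> inj_sq unfolding \<mu>_def inj_on_def by (auto dest: injD)
  have rng: "\<mu> ` {..<Suc n} \<subseteq> range sq" by (auto simp: \<mu>_def)
  have half: "\<And>i. \<mu> i \<in> half_disc" by (simp add: \<mu>_def sq_half)
  define K where "K i = knorm (lk n) (\<mu> i)" for i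
  have Kpos: "0 < K i" for i unfolding K_def \<mu>_def by (rule knorm_sq_pos(1)[OF n1])
  have V0: "Vs n (\<mu> 0) = Inl ` {B..<B + n}"
    using modiv[of n n k] by (simp add: \<mu>_def \<nu>_def Vs_sq B_def)
  have Vi: "Vs n (\<mu> i) = {Inl (B + (i - 1))}" if "1 \<le> i" "i < Suc n" for i
    using modiv[of "i - 1" n k] that by (simp add: \<mu>_def \<nu>_def Vs_sq B_def)
  have K0sq: "(K 0)\<^sup>2 = real n / (1 - (rr (B + n))\<^sup>2)"
    using knorm_sq_pos(2)[OF n1, of "B + n"] V0 by (simp add: K_def \<mu>_def \<nu>_def card_image)
  have rrB: "0 \<le> rr (B + j)" "rr (B + j) \<le> t" for j
    using rr_pos[of "B + j"] unfolding rr_def t_def B_def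
    by (auto simp: divide_simps)
  have t3: "t \<le> 1/3" by (simp add: t_def divide_simps)
  have h89: "8/9 \<le> 1 - (rr (B + n))\<^sup>2"
    using power_mono[OF rr_le[of "B + n"], of 2] rr_pos[of "B + n"] by (simp add: power2_eq_square)
  have n1r: "1 \<le> real n" using n1 by simp
  have hh: "1 - (rr (B + n))\<^sup>2 \<le> real n" using n1r zero_le_power2[of "rr (B + n)"] by linarith
  have hp: "0 < 1 - (rr (B + n))\<^sup>2" using h89 by linarith
  have K0ge: "1 \<le> (K 0)\<^sup>2" unfolding K0sq using hh hp by (simp add: le_divide_eq)
  define c where "c i = complex_of_real (K i / K 0)" for i
  define e where "e i = (if i = 0 then 1 else - 1) / complex_of_real (K 0)" for i :: nat
  have ae: "(\<lambda>i. (if i = 0 then 1 else - c i) / complex_of_real (knorm (lk n) (\<mu> i))) = e"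
  proof
    fix i show "(if i = 0 then 1 else - c i) / complex_of_real (knorm (lk n) (\<mu> i)) = e i"
    proof (cases "i = 0")
      case False
      have "(K i / K 0) / K i = 1 / K 0" using Kpos[of i] by (simp add: field_simps)
      hence "complex_of_real (K i / K 0) / complex_of_real (K i) = 1 / complex_of_real (K 0)"
        by (metis of_real_divide of_real_1)
      thus ?thesis using False by (simp add: e_def c_def K_def[symmetric])
    qed (simp add: e_def K_def)
  qed
  define U :: "(nat + complex) set" where "U = Inl ` {B..<B + n}"
  have VU: "Vs n (\<mu> i) \<subseteq> U" if "i < Suc n" for i
    using V0 Vi[of i] that by (cases "i = 0") (auto simp: U_def intro!: imageI)
  have tmb: "Re (Qf szego (Suc n) \<mu> (\<lambda>i. e i * (if r \<in> Vs n (\<mu> i) then 1 else 0))) \<le> 3 * t\<^sup>2"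
    if r: "r \<in> U" for r
  proof -
    obtain j where j: "j \<in> {B..<B + n}" "r = Inl j" using r by (auto simp: U_def)
    define q where "q = j - B"
    have q: "q < n" "r = Inl (B + q)" using j by (auto simp: q_def)
    define b where "b = (\<lambda>i. e i * (if r \<in> Vs n (\<mu> i) then 1 else 0))"
    have b0: "b 0 = e 0" using V0 q by (simp add: b_def U_def)
    have bp: "b (Suc q) = e (Suc q)" using Vi[of "Suc q"] q by (simp add: b_def)
    have bz: "b i = 0" if "i < Suc n" "i \<noteq> 0" "i \<noteq> Suc q" for i
      using Vi[of i] that q by (auto simp: b_def)
    have "Qf szego (Suc n) \<mu> b = cnj (b 0) * b 0 * szego (\<mu> 0) (\<mu> 0) + cnj (b 0) * b (Suc q) * szego (\<mu> 0) (\<mu> (Suc q))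
       + cnj (b (Suc q)) * b 0 * szego (\<mu> (Suc q)) (\<mu> 0) + cnj (b (Suc q)) * b (Suc q) * szego (\<mu> (Suc q)) (\<mu> (Suc q))"
      by (rule Qf_two) (use q bz in auto)
    also have "\<dots> = complex_of_real ((1 / (K 0)\<^sup>2) * (1 / (1 - (rr (B + n))\<^sup>2) - 2 / (1 - rr (B + n) * rr (B + q)) + 1 / (1 - (rr (B + q))\<^sup>2)))"
    proof -
      define u where "u = rr (B + n)"
      define v where "v = rr (B + q)"
      define k0 where "k0 = K 0"
      have e0: "e 0 = complex_of_real (1 / k0)" by (simp add: e_def k0_def)
      have ep: "e (Suc q) = complex_of_real (- 1 / k0)" by (simp add: e_def k0_def)
      have m0: "\<mu> 0 = complex_of_real u" by (simp add: \<mu>_def \<nu>_def u_def sq_rr)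
      have mp: "\<mu> (Suc q) = complex_of_real v" by (simp add: \<mu>_def \<nu>_def v_def sq_rr)
      have "cnj (b 0) * b 0 * szego (\<mu> 0) (\<mu> 0) + cnj (b 0) * b (Suc q) * szego (\<mu> 0) (\<mu> (Suc q))
       + cnj (b (Suc q)) * b 0 * szego (\<mu> (Suc q)) (\<mu> 0) + cnj (b (Suc q)) * b (Suc q) * szego (\<mu> (Suc q)) (\<mu> (Suc q))
       = complex_of_real ((1 / k0) * (1 / k0) * (1 / (1 - u * u)) + (1 / k0) * (- 1 / k0) * (1 / (1 - u * v))
          + (- 1 / k0) * (1 / k0) * (1 / (1 - v * u)) + (- 1 / k0) * (- 1 / k0) * (1 / (1 - v * v)))"
        unfolding b0 bp e0 ep m0 mp szego_real complex_cnj_complex_of_real of_real_mult of_real_add ..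
      also have "(1 / k0) * (1 / k0) * (1 / (1 - u * u)) + (1 / k0) * (- 1 / k0) * (1 / (1 - u * v))
          + (- 1 / k0) * (1 / k0) * (1 / (1 - v * u)) + (- 1 / k0) * (- 1 / k0) * (1 / (1 - v * v))
          = (1 / k0\<^sup>2) * (1 / (1 - u\<^sup>2) - 2 / (1 - u * v) + 1 / (1 - v\<^sup>2))"
        by (simp add: power2_eq_square algebra_simps mult.commute[of v u])
      finally show ?thesis by (simp add: u_def v_def k0_def)
    qed
    finally have eq: "Re (Qf szego (Suc n) \<mu> b) = (1 / (K 0)\<^sup>2) * (1 / (1 - (rr (B + n))\<^sup>2) - 2 / (1 - rr (B + n) * rr (B + q)) + 1 / (1 - (rr (B + q))\<^sup>2))"
      by simp
    have D: "1 / (1 - (rr (B + n))\<^sup>2) - 2 / (1 - rr (B + n) * rr (B + q)) + 1 / (1 - (rr (B + q))\<^sup>2) \<le> 3 * t\<^sup>2"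
      by (rule D_bound) (use rrB t3 in auto)
    have f: "0 < 1 / (K 0)\<^sup>2" "1 / (K 0)\<^sup>2 \<le> 1" using K0ge by (auto simp: divide_simps)
    have "(1 / (K 0)\<^sup>2) * (1 / (1 - (rr (B + n))\<^sup>2) - 2 / (1 - rr (B + n) * rr (B + q)) + 1 / (1 - (rr (B + q))\<^sup>2))
        \<le> (1 / (K 0)\<^sup>2) * (3 * t\<^sup>2)" using D f by (intro mult_left_mono) auto
    also have "\<dots> \<le> 1 * (3 * t\<^sup>2)" using f by (intro mult_right_mono) auto
    finally show ?thesis using eq by (simp add: b_def)
  qed
  have Qeq: "Qf (lk n) (Suc n) \<mu> e = (\<Sum>r\<in>U. Qf szego (Suc n) \<mu> (\<lambda>i. e i * (if r \<in> Vs n (\<mu> i) then 1 else 0)))"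
    unfolding lk_fun by (rule Qf_feat) (use VU in \<open>auto simp: U_def\<close>)
  have "Re (Qf (lk n) (Suc n) \<mu> e) \<le> of_nat (card U) * (3 * t\<^sup>2)"
    unfolding Qeq Re_sum by (rule sum_bounded_above) (rule tmb)
  also have "card U = n" by (simp add: U_def card_image)
  finally have Qb: "Re (Qf (lk n) (Suc n) \<mu> e) \<le> real n * (3 * t\<^sup>2)" .
  have kk: "2 * n / \<epsilon> \<le> real k" unfolding k_def by linarith
  have "2 * real n < (real k + 3) * \<epsilon>" using kk \<epsilon>(1) by (simp add: field_simps)
  hence "(2 * real n)\<^sup>2 < ((real k + 3) * \<epsilon>)\<^sup>2" using n1 by (intro power_strict_mono) auto
  moreover have "3 * real n \<le> (2 * real n)\<^sup>2" using n1 by (simp add: power2_eq_square)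
  ultimately have "3 * real n < ((real k + 3) * \<epsilon>)\<^sup>2" by linarith
  hence "3 * real n < \<epsilon>\<^sup>2 * (real k + 3)\<^sup>2" by (simp add: power_mult_distrib mult.commute)
  hence "3 * real n / (real k + 3)\<^sup>2 < \<epsilon>\<^sup>2" by (simp add: divide_less_eq)
  moreover have "real n * (3 * t\<^sup>2) = 3 * real n / (real k + 3)\<^sup>2" by (simp add: t_def power_divide)
  ultimately have small: "real n * (3 * t\<^sup>2) < \<epsilon>\<^sup>2" by simp
  have "span_dist (lk n) (Suc n) \<mu> \<le> comb_norm (lk n) (Suc n) (\<lambda>i. (if i = 0 then 1 else - c i) / complex_of_real (knorm (lk n) (\<mu> i))) \<mu>"
    unfolding span_dist_def
  proof (rule cINF_lower)
    show "bdd_below (range (\<lambda>c. comb_norm (lk n) (Suc n) (\<lambda>i. (if i = 0 then 1 else - c i) / complex_of_real (knorm (lk n) (\<mu> i))) \<mu>))"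
      by (rule bdd_belowI[of _ 0]) (auto simp: comb_norm_Qf intro!: Re_Qf_nonneg half)
  qed simp
  also have "\<dots> = sqrt (Re (Qf (lk n) (Suc n) \<mu> e))" unfolding comb_norm_Qf ae ..
  also have "\<dots> < \<epsilon>"
  proof -
    have "sqrt (Re (Qf (lk n) (Suc n) \<mu> e)) < sqrt (\<epsilon>\<^sup>2)" using Qb small by (intro real_sqrt_less_mono) linarith
    thus ?thesis using \<epsilon>(1) by simp
  qed
  finally have "span_dist (lk n) (Suc n) \<mu> < \<epsilon>" .
  moreover have "span_dist (lk n) (Suc n) \<mu> \<ge> \<epsilon>" using \<epsilon>(2) inj\<mu> rng by blast
  ultimately show False by simp
qed


lemma lk_sq_real: "lk n (sq i) (sq j) = complex_of_real (real (card (Vs n (sq i) \<inter> Vs n (sq j))) / (1 - rr i * rr j))"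
  unfolding lk_def gk_def sq_rr szego_real by simp

lemma Ksq_le: assumes "1 \<le> n" shows "(knorm (lk n) (sq N))\<^sup>2 \<le> 3/2 * n"
proof -
  have "real (card (Vs n (sq N))) \<le> n" using card_Vs_le[OF assms, of "sq N"] by simp
  moreover have "8/9 \<le> 1 - (rr N)\<^sup>2"
    using power_mono[OF rr_le[of N], of 2] rr_pos[of N] by (simp add: power2_eq_square)
  moreover have "0 \<le> real (card (Vs n (sq N)))" by simp
  ultimately have A: "real (card (Vs n (sq N))) / (1 - (rr N)\<^sup>2) \<le> real n / (8/9)"
    by (intro frac_le) auto
  have B: "real n / (8/9) \<le> 3/2 * n" by simp
  show ?thesis unfolding knorm_sq_pos(2)[OF assms] using order_trans[OF A B] .
qed

lemma abs_div_sq: "(\<bar>a\<bar> / \<bar>b\<bar>)\<^sup>2 = (a / b)\<^sup>2" for a b :: real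
  by (metis abs_divide power2_abs)

lemma weak:
  assumes n2: "2 \<le> n"
  shows "weakly_separated (lk n) sq"
proof -
  have n1: "1 \<le> n" using n2 by simp
  have main: "dk (lk n) (sq i) (sq j) \<ge> sqrt (1 / (3 * n))" if ij: "i \<noteq> j" for i j
  proof -
    define Kz where "Kz = knorm (lk n) (sq i)"
    define Kw where "Kw = knorm (lk n) (sq j)"
    have Kzp: "0 < Kz" unfolding Kz_def by (rule knorm_sq_pos(1)[OF n1])
    have Kwp: "0 < Kw" unfolding Kw_def by (rule knorm_sq_pos(1)[OF n1])
    define \<alpha> where "\<alpha> = real (card (Vs n (sq j) \<inter> Vs n (sq i))) / (1 - rr j * rr i)"
    have lwz: "lk n (sq j) (sq i) = complex_of_real \<alpha>" unfolding \<alpha>_def by (rule lk_sq_real)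
    have lzw: "lk n (sq i) (sq j) = complex_of_real \<alpha>" unfolding \<alpha>_def lk_sq_real
      by (simp add: Int_commute mult.commute)
    have lzz: "lk n (sq i) (sq i) = complex_of_real (Kz\<^sup>2)"
      unfolding Kz_def knorm_sq_pos(2)[OF n1] lk_sq_real by (simp add: power2_eq_square)
    have lww: "lk n (sq j) (sq j) = complex_of_real (Kw\<^sup>2)"
      unfolding Kw_def knorm_sq_pos(2)[OF n1] lk_sq_real by (simp add: power2_eq_square)
    define \<nu> where "\<nu> t = (if t = 0 then i else j)" for t :: nat
    have inj: "inj_on \<nu> {..<2}" unfolding inj_on_def \<nu>_def using ij by auto
    define a where "a t = (if t = 0 then complex_of_real (1 / Kz) else complex_of_real (- \<alpha> / (Kz * Kw * Kw)))" for t :: nat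
    have LB: "Re (Qf (lk n) 2 (\<lambda>t. sq (\<nu> t)) a) \<ge> (cmod (a 0))\<^sup>2 / 2"
      by (rule lower_bound[OF n2 _ inj]) simp
    have "Qf (lk n) 2 (\<lambda>t. sq (\<nu> t)) a =
       complex_of_real ((1 / Kz) * (1 / Kz) * Kz\<^sup>2 + (1 / Kz) * (- \<alpha> / (Kz * Kw * Kw)) * \<alpha>
        + (- \<alpha> / (Kz * Kw * Kw)) * (1 / Kz) * \<alpha> + (- \<alpha> / (Kz * Kw * Kw)) * (- \<alpha> / (Kz * Kw * Kw)) * Kw\<^sup>2)"
      unfolding Qf_def by (simp add: numeral_2_eq_2 \<nu>_def a_def lzz lzw lwz lww)
    also have "(1 / Kz) * (1 / Kz) * Kz\<^sup>2 + (1 / Kz) * (- \<alpha> / (Kz * Kw * Kw)) * \<alpha>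
        + (- \<alpha> / (Kz * Kw * Kw)) * (1 / Kz) * \<alpha> + (- \<alpha> / (Kz * Kw * Kw)) * (- \<alpha> / (Kz * Kw * Kw)) * Kw\<^sup>2
        = 1 - (\<alpha> / (Kz * Kw))\<^sup>2"
      using Kzp Kwp by (simp add: field_simps power2_eq_square)
    finally have Qv: "Re (Qf (lk n) 2 (\<lambda>t. sq (\<nu> t)) a) = 1 - (\<alpha> / (Kz * Kw))\<^sup>2" by simp
    have "(cmod (a 0))\<^sup>2 = 1 / Kz\<^sup>2" using Kzp by (simp add: a_def norm_divide power_divide)
    also have "\<dots> \<ge> 1 / (3/2 * n)" using Ksq_le[OF n1, of i] Kzp n1 unfolding Kz_def[symmetric]
      by (intro divide_left_mono) auto
    finally have "1 / (3 * n) \<le> 1 - (\<alpha> / (Kz * Kw))\<^sup>2" using LB Qv by simp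
    moreover have "dk (lk n) (sq i) (sq j) = sqrt (1 - (\<alpha> / (Kz * Kw))\<^sup>2)"
      unfolding dk_def lwz Kz_def[symmetric] Kw_def[symmetric]
        by (simp add: norm_divide norm_mult del: of_real_mult) (metis abs_div_sq abs_mult)
    ultimately show ?thesis by (simp add: real_sqrt_le_mono)
  qed
  show ?thesis unfolding weakly_separated_def
    using n1 main by (intro exI[of _ "sqrt (1 / (3 * n))"]) auto
qed

lemma rkhs_one: "rkhs_ball half_disc szego (\<lambda>_. 1) 1"
  unfolding rkhs_ball_def psd_on_def Let_def
proof (intro allI impI)
  fix m :: nat and x :: "nat \<Rightarrow> complex" and c
  assume x: "\<forall>i<m. x i \<in> half_disc"
  have xs: "\<And>i. i < m \<Longrightarrow> cmod (x i) < 1" using x by (auto simp: half_disc_def)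
  have "(\<Sum>i<m. \<Sum>j<m. cnj (c i) * c j * (complex_of_real (1\<^sup>2) * szego (x i) (x j) - 1 * cnj 1))
      = Qf (\<lambda>z w. (z * cnj w) ^ 1 * szego z w) m x c"
    unfolding Qf_def
    by (intro sum.cong refl) (subst szego_split[OF xs xs], auto)
  thus "Im (\<Sum>i<m. \<Sum>j<m. cnj (c i) * c j * (complex_of_real (1\<^sup>2) * szego (x i) (x j) - 1 * cnj 1)) = 0 \<and>
        0 \<le> Re (\<Sum>i<m. \<Sum>j<m. cnj (c i) * c j * (complex_of_real (1\<^sup>2) * szego (x i) (x j) - 1 * cnj 1))"
    using Qf_pow_szego[of m x 1 c] xs by simp
qed

lemma half_bound: "z \<in> half_disc \<Longrightarrow> 3/4 < 1 - (cmod z)\<^sup>2 \<and> cmod z < 1"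
proof -
  assume "z \<in> half_disc"
  hence h: "cmod z < 1/2" by (simp add: half_disc_def)
  have "(cmod z)\<^sup>2 < (1/2)\<^sup>2" by (rule power_strict_mono[OF h]) auto
  thus ?thesis using h by (simp add: power2_eq_square)
qed

lemma not_carleson:
  assumes "range lam \<subseteq> half_disc"
  shows "\<not> carleson half_disc szego lam"
proof
  assume "carleson half_disc szego lam"
  then obtain C where C1: "C > 0" and H: "\<forall>f D. D \<ge> 0 \<longrightarrow> rkhs_ball half_disc szego f D \<longrightarrow>
      (\<forall>N. (\<Sum>i<N. (cmod (f (lam i)))\<^sup>2 / (knorm szego (lam i))\<^sup>2) \<le> C * D\<^sup>2)"
    unfolding carleson_def by blast
  have C: "C > 0" "\<And>N. (\<Sum>i<N. (cmod (1::complex))\<^sup>2 / (knorm szego (lam i))\<^sup>2) \<le> C * 1\<^sup>2"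
    using C1 spec[OF spec[OF H, of "\<lambda>_. 1"], of 1] rkhs_one by auto
  define N where "N = nat \<lceil>2 * C\<rceil>"
  have t: "(cmod (1::complex))\<^sup>2 / (knorm szego (lam i))\<^sup>2 = 1 - (cmod (lam i))\<^sup>2" for i
  proof -
    have li: "lam i \<in> half_disc" using assms by auto
    have "(knorm szego (lam i))\<^sup>2 = 1 / (1 - (cmod (lam i))\<^sup>2)" using knorm_szego half_bound[OF li] by simp
    thus ?thesis by simp
  qed
  have "(\<Sum>i<N. 3/4) \<le> (\<Sum>i<N. (cmod (1::complex))\<^sup>2 / (knorm szego (lam i))\<^sup>2)"
    unfolding t
  proof (intro sum_mono)
    fix i assume "i \<in> {..<N}"
    have "lam i \<in> half_disc" using assms by auto
    thus "3/4 \<le> 1 - (cmod (lam i))\<^sup>2" using half_bound by fastforce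
  qed
  also have "\<dots> \<le> C" using C(2)[of N] by simp
  finally have "3/4 * real N \<le> C" by simp
  moreover have "2 * C \<le> real N" unfolding N_def by linarith
  ultimately show False using C(1) by linarith
qed


definition islast :: "nat \<Rightarrow> complex \<Rightarrow> bool" where
  "islast n z \<longleftrightarrow> z \<in> range sq \<and> inv sq z mod Suc n = n"

lemma islast_sq: "islast n (sq N) \<longleftrightarrow> N mod Suc n = n"
  using inv_f_f[OF inj_sq] by (simp add: islast_def)

lemma Vs_sq_Inl: "r \<in> Vs n (sq N) \<Longrightarrow> \<exists>q. r = Inl q"
  by (auto simp: Vs_sq split: if_splits)

lemma disj_Vs:
  assumes "z \<noteq> w" "islast n z = islast n w"
  shows "Vs n z \<inter> Vs n w = {}"
proof (cases "z \<in> range sq")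
  case zin: True
  then obtain N where z: "z = sq N" by auto
  show ?thesis
  proof (cases "w \<in> range sq")
    case True
    then obtain M where w: "w = sq M" by auto
    have NM: "N \<noteq> M" using assms(1) z w by auto
    have lm: "(N mod Suc n = n) = (M mod Suc n = n)" using assms(2) z w by (simp add: islast_sq)
    show ?thesis
    proof (rule ccontr)
      assume "Vs n z \<inter> Vs n w \<noteq> {}"
      then obtain r where r: "r \<in> Vs n (sq N)" "r \<in> Vs n (sq M)" using z w by auto
      then obtain q where q: "r = Inl q" using Vs_sq_Inl by blast
      have a: "(N mod Suc n \<noteq> n \<and> N = q) \<or> (q mod Suc n \<noteq> n \<and> N = lastof n q)"
        using r(1) q Inl_in_Vs by blast
      have b: "(M mod Suc n \<noteq> n \<and> M = q) \<or> (q mod Suc n \<noteq> n \<and> M = lastof n q)"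
        using r(2) q Inl_in_Vs by blast
      show False using a b NM lm lastof_last[of n q] by auto
    qed
  next
    case False
    thus ?thesis using z by (auto simp: Vs_out Vs_sq)
  qed
next
  case False
  hence "Vs n z = {Inr z}" by (rule Vs_out)
  moreover have "Inr z \<notin> Vs n w"
    using assms(1) by (cases "w \<in> range sq") (auto simp: Vs_def)
  ultimately show ?thesis by auto
qed

lemma lk_zero: "z \<noteq> w \<Longrightarrow> islast n z = islast n w \<Longrightarrow> lk n z w = 0"
  using disj_Vs by (simp add: lk_def gk_def)

lemma knorm_lk_pos: "1 \<le> n \<Longrightarrow> z \<in> half_disc \<Longrightarrow> 0 < knorm (lk n) z"
proof -
  assume n1: "1 \<le> n" and z: "z \<in> half_disc"
  have b: "3/4 < 1 - (cmod z)\<^sup>2" using half_bound[OF z] by simp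
  have "0 < real (card (Vs n z)) / (1 - (cmod z)\<^sup>2)" using card_Vs_ge[OF n1, of z] b by simp
  thus ?thesis by (simp add: knorm_def lk_diag)
qed

lemma knorm_szego_pos: "z \<in> half_disc \<Longrightarrow> 0 < knorm szego z"
proof -
  assume z: "z \<in> half_disc"
  have b: "3/4 < 1 - (cmod z)\<^sup>2" using half_bound[OF z] by simp
  thus ?thesis by (simp add: knorm_def szego_diag)
qed

lemma same_class_subset:
  fixes P :: "nat \<Rightarrow> bool" and m :: nat
  obtains F where "F \<subseteq> {..<2 * m}" "card F = m" "\<forall>a\<in>F. \<forall>b\<in>F. P a = P b"
proof -
  define I where "I = {i\<in>{..<2 * m}. P i}"
  define J where "J = {i\<in>{..<2 * m}. \<not> P i}"
  have "I \<union> J = {..<2 * m}" "I \<inter> J = {}" by (auto simp: I_def J_def)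
  hence "card I + card J = 2 * m" by (metis card_Un_disjoint card_lessThan finite_Un finite_lessThan)
  hence "m \<le> card I \<or> m \<le> card J" by linarith
  thus ?thesis
  proof
    assume "m \<le> card I"
    then obtain F where "F \<subseteq> I" "card F = m" by (rule obtain_subset_with_card_n) blast
    thus ?thesis using that by (auto simp: I_def)
  next
    assume "m \<le> card J"
    then obtain F where "F \<subseteq> J" "card F = m" by (rule obtain_subset_with_card_n) blast
    thus ?thesis using that by (auto simp: J_def)
  qed
qed


lemma not_interp:
  assumes n1: "1 \<le> n" and rng: "range lam \<subseteq> half_disc"
  shows "\<not> interpolating half_disc szego (lk n) lam"
proof
  assume I: "interpolating half_disc szego (lk n) lam"
  have inX: "\<And>i. lam i \<in> half_disc" using rng by auto
  define R where "R z = knorm (lk n) z / knorm szego z" for z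
  have Rpos: "\<And>i. 0 < R (lam i)" unfolding R_def using knorm_lk_pos[OF n1 inX] knorm_szego_pos[OF inX] by simp
  show False
  proof (cases "inj lam")
    case False
    then obtain i j where ij: "i \<noteq> j" "lam i = lam j" unfolding inj_def by blast
    have bnd: "\<exists>B. \<forall>t. cmod ((\<lambda>t. if t = i then 1 else 0::complex) t) \<le> B" by (rule exI[of _ 1]) auto
    obtain \<phi> where \<phi>: "\<forall>t. \<phi> (lam t) = (\<lambda>t. if t = i then 1 else 0::complex) t * complex_of_real (knorm (lk n) (lam t) / knorm szego (lam t))"
      using I[unfolded interpolating_def, rule_format, OF bnd] by blast
    have "\<phi> (lam i) = complex_of_real (R (lam i))" using \<phi> by (simp add: R_def)
    moreover have "\<phi> (lam j) = 0" using \<phi> ij by simp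
    ultimately have "complex_of_real (R (lam i)) = 0" using ij by simp
    thus False using Rpos[of i] by simp
  next
    case True
    have bnd1: "\<exists>B. \<forall>t. cmod ((\<lambda>t. 1::complex) t) \<le> B" by (rule exI[of _ 1]) auto
    obtain \<phi> where mult: "is_multiplier half_disc szego (lk n) \<phi>"
      and \<phi>v: "\<forall>t. \<phi> (lam t) = (\<lambda>t. 1::complex) t * complex_of_real (knorm (lk n) (lam t) / knorm szego (lam t))"
      using I[unfolded interpolating_def, rule_format, OF bnd1] by blast
    from mult obtain M where M0: "M \<ge> 0" and MH: "\<forall>f C. C \<ge> 0 \<longrightarrow> rkhs_ball half_disc szego f C \<longrightarrow>
        rkhs_ball half_disc (lk n) (\<lambda>z. \<phi> z * f z) (M * C)"
      unfolding is_multiplier_def by blast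
    have rb: "rkhs_ball half_disc (lk n) (\<lambda>z. \<phi> z * 1) M"
      using spec[OF spec[OF MH, of "\<lambda>_. 1"], of 1] rkhs_one by simp
    define m where "m = nat \<lceil>2 * M\<^sup>2\<rceil> + 1"
    obtain F where F: "F \<subseteq> {..<2 * m}" "card F = m" "\<forall>a\<in>F. \<forall>b\<in>F. islast n (lam a) = islast n (lam b)"
      by (rule same_class_subset[where P="\<lambda>i. islast n (lam i)" and m=m]) blast
    have finF: "finite F" by (rule finite_subset[OF F(1)]) simp
    obtain h where h: "bij_betw h {0..<m} F" using ex_bij_betw_nat_finite[OF finF] F(2) by auto
    define x where "x p = lam (h p)" for p
    have hF: "h p \<in> F" if "p < m" for p using bij_betwE[OF h] that by simp
    have xX: "x p \<in> half_disc" for p by (simp add: x_def inX)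
    have xdist: "x p \<noteq> x q" if "p < m" "q < m" "p \<noteq> q" for p q
    proof
      assume "x p = x q"
      hence "lam (h p) = lam (h q)" by (simp add: x_def)
      hence "h p = h q" by (rule injD[OF True])
      hence "p = q" using inj_onD[OF bij_betw_imp_inj_on[OF h]] that by simp
      thus False using that by simp
    qed
    have offd: "lk n (x p) (x q) = 0" if "p < m" "q < m" "p \<noteq> q" for p q
    proof -
      have "islast n (x p) = islast n (x q)" using F(3) hF[OF that(1)] hF[OF that(2)] unfolding x_def by blast
      thus ?thesis by (rule lk_zero[OF xdist[OF that]])
    qed
    define d where "d p = 1 - (cmod (x p))\<^sup>2" for p
    define \<rho> where "\<rho> p = R (x p)" for p
    define lp where "lp p = real (card (Vs n (x p))) / (1 - (cmod (x p))\<^sup>2)" for p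
    have ldiag: "lk n (x p) (x p) = complex_of_real (lp p)" for p by (simp add: lp_def lk_diag)
    have \<phi>x: "\<phi> (x p) = complex_of_real (\<rho> p)" for p using \<phi>v by (simp add: x_def \<rho>_def R_def)
    have dge: "3/4 < d p" for p using half_bound[OF xX] by (simp add: d_def)
    have x1: "cmod (x p) < 1" for p using half_bound[OF xX] by simp
    have card1: "1 \<le> real (card (Vs n (x p)))" for p using card_Vs_ge[OF n1] by simp
    have lppos: "0 < lp p" for p using card1[of p] dge[of p] by (simp add: lp_def d_def)
    have \<rho>sq: "(\<rho> p)\<^sup>2 = real (card (Vs n (x p)))" for p
    proof -
      have "(\<rho> p)\<^sup>2 = (knorm (lk n) (x p))\<^sup>2 / (knorm szego (x p))\<^sup>2" by (simp add: \<rho>_def R_def power_divide)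
      also have "\<dots> = (real (card (Vs n (x p))) / (1 - (cmod (x p))\<^sup>2)) / (1 / (1 - (cmod (x p))\<^sup>2))"
        by (simp add: knorm_lk[OF x1] knorm_szego[OF x1])
      also have "\<dots> = real (card (Vs n (x p)))" using dge[of p] by (simp add: d_def)
      finally show ?thesis .
    qed
    define cr where "cr p = \<rho> p / lp p" for p
    have key0: "(\<rho> p)\<^sup>2 / lp p = d p" for p
    proof -
      have "lp p = real (card (Vs n (x p))) / d p" by (simp add: lp_def d_def)
      hence "(\<rho> p)\<^sup>2 / lp p = real (card (Vs n (x p))) / (real (card (Vs n (x p))) / d p)" using \<rho>sq[of p] by simp
      also have "\<dots> = d p" using card1[of p] dge[of p] by simp
      finally show ?thesis .
    qed
    have key1: "cr p * cr p * lp p = d p" for p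
    proof -
      have "cr p * cr p * lp p = (\<rho> p)\<^sup>2 / lp p" using lppos[of p] by (simp add: cr_def power2_eq_square field_simps)
      thus ?thesis using key0 by simp
    qed
    have key2: "cr p * \<rho> p = d p" for p
    proof -
      have "cr p * \<rho> p = (\<rho> p)\<^sup>2 / lp p" using lppos[of p] by (simp add: cr_def power2_eq_square field_simps)
      thus ?thesis using key0 by simp
    qed
    define S where "S = (\<Sum>p<m. d p)"
    define c where "c p = complex_of_real (cr p)" for p
    have inner: "(\<Sum>q<m. cnj (c p) * c q * (complex_of_real (M\<^sup>2) * lk n (x p) (x q) - \<phi> (x p) * 1 * cnj (\<phi> (x q) * 1)))
        = complex_of_real (M\<^sup>2 * d p - d p * S)" if p: "p < m" for p
    proof -
      have A: "(\<Sum>q<m. cnj (c p) * c q * (complex_of_real (M\<^sup>2) * lk n (x p) (x q))) = complex_of_real (M\<^sup>2 * d p)"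
      proof -
        have "(\<Sum>q<m. cnj (c p) * c q * (complex_of_real (M\<^sup>2) * lk n (x p) (x q)))
            = sum (\<lambda>q. cnj (c p) * c q * (complex_of_real (M\<^sup>2) * lk n (x p) (x q))) {p}"
          by (rule sum_supp) (use p offd in auto)
        also have "\<dots> = complex_of_real (M\<^sup>2 * (cr p * cr p * lp p))" by (simp add: c_def ldiag mult_ac)
        finally show ?thesis using key1[of p] by simp
      qed
      have B: "(\<Sum>q<m. cnj (c p) * c q * (\<phi> (x p) * 1 * cnj (\<phi> (x q) * 1))) = complex_of_real (d p * S)"
      proof -
        have "(\<Sum>q<m. cnj (c p) * c q * (\<phi> (x p) * 1 * cnj (\<phi> (x q) * 1)))
            = (\<Sum>q<m. complex_of_real ((cr p * \<rho> p) * (cr q * \<rho> q)))" by (simp add: c_def \<phi>x mult_ac)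
        also have "\<dots> = complex_of_real ((cr p * \<rho> p) * (\<Sum>q<m. cr q * \<rho> q))"
          by (simp add: sum_distrib_left)
        finally show ?thesis using key2 by (simp add: S_def)
      qed
      have "(\<Sum>q<m. cnj (c p) * c q * (complex_of_real (M\<^sup>2) * lk n (x p) (x q) - \<phi> (x p) * 1 * cnj (\<phi> (x q) * 1)))
          = (\<Sum>q<m. cnj (c p) * c q * (complex_of_real (M\<^sup>2) * lk n (x p) (x q))) - (\<Sum>q<m. cnj (c p) * c q * (\<phi> (x p) * 1 * cnj (\<phi> (x q) * 1)))"
        by (simp add: right_diff_distrib sum_subtractf)
      thus ?thesis using A B by simp
    qed
    have Qeq: "(\<Sum>p<m. \<Sum>q<m. cnj (c p) * c q * (complex_of_real (M\<^sup>2) * lk n (x p) (x q) - \<phi> (x p) * 1 * cnj (\<phi> (x q) * 1)))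
        = complex_of_real (M\<^sup>2 * S - S * S)"
    proof -
      have "(\<Sum>p<m. \<Sum>q<m. cnj (c p) * c q * (complex_of_real (M\<^sup>2) * lk n (x p) (x q) - \<phi> (x p) * 1 * cnj (\<phi> (x q) * 1)))
          = (\<Sum>p<m. complex_of_real (M\<^sup>2 * d p - d p * S))" by (rule sum.cong[OF refl], rule inner, simp)
      also have "\<dots> = complex_of_real (M\<^sup>2 * S - S * S)"
        by (simp add: S_def sum_subtractf sum_distrib_left sum_distrib_right mult.commute)
      finally show ?thesis .
    qed
    have "0 \<le> Re (\<Sum>p<m. \<Sum>q<m. cnj (c p) * c q * (complex_of_real (M\<^sup>2) * lk n (x p) (x q) - \<phi> (x p) * 1 * cnj (\<phi> (x q) * 1)))"
      using rb xX unfolding rkhs_ball_def psd_on_def Let_def by auto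
    hence ge: "0 \<le> M\<^sup>2 * S - S * S" unfolding Qeq by simp
    have "(\<Sum>p<m. 3/4) \<le> S" unfolding S_def by (rule sum_mono) (use dge in \<open>simp add: less_imp_le\<close>)
    hence S34: "3/4 * real m \<le> S" by simp
    have "1 \<le> m" by (simp add: m_def)
    hence "1 \<le> real m" by simp
    hence Spos: "0 < S" using S34 by linarith
    have "S * S \<le> M\<^sup>2 * S" using ge by simp
    hence "S \<le> M\<^sup>2" using Spos by (simp add: mult_le_cancel_right_pos)
    moreover have "2 * M\<^sup>2 + 1 \<le> real m" unfolding m_def by linarith
    ultimately show False using S34 zero_le_power2[of M] by linarith
  qed
qed


theorem mainTheorem10:
  fixes n :: nat
  assumes "n \<ge> 2"
  shows "\<exists>l :: complex \<Rightarrow> complex \<Rightarrow> complex.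
    psd_on half_disc l \<and> (\<forall>z\<in>half_disc. l z z \<noteq> 0) \<and>
    quot_psd_on half_disc l szego \<and>
    (\<forall>lam. range lam \<subseteq> half_disc \<longrightarrow>
       (interpolating half_disc szego l lam \<longleftrightarrow>
          carleson half_disc szego lam \<and> weakly_separated l lam)) \<and>
    \<not> automatic_separation half_disc l \<and>
    (\<exists>lam. range lam \<subseteq> half_disc \<and>
       n_weakly_separated n l lam \<and> \<not> n_weakly_separated (n + 1) l lam)"
proof -
  have n1: "1 \<le> n" using assms by simp
  have diag: "\<forall>z\<in>half_disc. lk n z z \<noteq> 0"
  proof
    fix z assume z: "z \<in> half_disc"
    have b: "3/4 < 1 - (cmod z)\<^sup>2" using half_bound[OF z] by simp
    have "0 < real (card (Vs n z)) / (1 - (cmod z)\<^sup>2)" using card_Vs_ge[OF n1, of z] b by simp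
    thus "lk n z z \<noteq> 0" unfolding lk_diag by (metis of_real_eq_0_iff less_irrefl)
  qed
  have quot: "quot_psd_on half_disc (lk n) szego"
    unfolding quot_psd_on_def using psd_gk[of n] by (auto simp: lk_def)
  have interp: "\<forall>lam. range lam \<subseteq> half_disc \<longrightarrow>
       (interpolating half_disc szego (lk n) lam \<longleftrightarrow> carleson half_disc szego lam \<and> weakly_separated (lk n) lam)"
    using not_interp[OF n1] not_carleson by blast
  have rs: "range sq \<subseteq> half_disc" using sq_half by auto
  have nauto: "\<not> automatic_separation half_disc (lk n)"
  proof
    assume "automatic_separation half_disc (lk n)"
    hence "\<forall>n'\<ge>3. n_weakly_separated n' (lk n) sq"
      unfolding automatic_separation_def using rs weak[OF assms] by blast
    hence "n_weakly_separated (Suc n) (lk n) sq" using assms by simp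
    thus False using not_nweak[OF n1] by simp
  qed
  have ex: "\<exists>lam. range lam \<subseteq> half_disc \<and> n_weakly_separated n (lk n) lam \<and> \<not> n_weakly_separated (n + 1) (lk n) lam"
    using rs nweak[OF n1] not_nweak[OF n1] by auto
  show ?thesis
    by (rule exI[of _ "lk n"]) (use psd_lk[of n] diag quot interp nauto ex in blast)
qed

end
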